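(* Let $M$ be a commutative semiring. Then $M$ is a semifield if and only if for every non-constant fuzzy ideal $\mu$ of $M$ one has $\mu(x)=\mu(y)<\mu(0)$ for all $x,y\in M\setminus\{0\}$.
   Context: Semirings are taken in the sense of Golan: $(M,+)$ is a commutative monoid with identity $0$, $(M,\cdot)$ is a monoid with identity $1\neq 0$, multiplication distributes over addition, and $0x=x0=0$. A semifield is a commutative semiring in which every nonzero element has a multiplicative inverse. A fuzzy ideal of $M$ is a map $\mu:M\to[0,1]$, not identically $0$, with $\mu(x+y)\ge\min[\mu(x),\mu(y)]$, $\mu(xy)\ge\mu(y)$ and $\mu(xy)\ge\mu(x)$ for all $x,y\in M$. Non-constant means not constant on $M$. *)

theory Defs
  imports Complex_Main
begin

text \<open>Semirings in the sense of Golan, commutative: the type class comm_semiring_1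
(commutative monoid (+,0), commutative monoid (*,1), distributivity, 0 absorbing,
and 0 \<noteq> 1).\<close>

definition semifield :: "'a::comm_semiring_1 itself \<Rightarrow> bool" where
  "semifield _ \<longleftrightarrow> (\<forall>x::'a. x \<noteq> 0 \<longrightarrow> (\<exists>y. x * y = 1))"

definition fuzzy_ideal :: "('a::comm_semiring_1 \<Rightarrow> real) \<Rightarrow> bool" where
  "fuzzy_ideal \<mu> \<longleftrightarrow>
     (\<forall>x. 0 \<le> \<mu> x \<and> \<mu> x \<le> 1) \<and>
     (\<exists>x. \<mu> x \<noteq> 0) \<and>
     (\<forall>x y. \<mu> (x + y) \<ge> min (\<mu> x) (\<mu> y)) \<and>
     (\<forall>x y. \<mu> (x * y) \<ge> \<mu> y) \<and>
     (\<forall>x y. \<mu> (x * y) \<ge> \<mu> x)"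

definition non_constant :: "('a \<Rightarrow> real) \<Rightarrow> bool" where
  "non_constant \<mu> \<longleftrightarrow> (\<exists>x y. \<mu> x \<noteq> \<mu> y)"

end

theory Submission
  imports Defs
begin

theorem theorem3p9:
  shows "semifield TYPE('a::comm_semiring_1) \<longleftrightarrow>
    (\<forall>\<mu> :: 'a \<Rightarrow> real. fuzzy_ideal \<mu> \<and> non_constant \<mu> \<longrightarrow>
       (\<forall>x y. x \<noteq> 0 \<and> y \<noteq> 0 \<longrightarrow> \<mu> x = \<mu> y \<and> \<mu> y < \<mu> 0))"
proof
  assume sf: "semifield TYPE('a)"
  show "\<forall>\<mu> :: 'a \<Rightarrow> real. fuzzy_ideal \<mu> \<and> non_constant \<mu> \<longrightarrow>
       (\<forall>x y. x \<noteq> 0 \<and> y \<noteq> 0 \<longrightarrow> \<mu> x = \<mu> y \<and> \<mu> y < \<mu> 0)"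
  proof (intro allI impI)
    fix \<mu> :: "'a \<Rightarrow> real" and x y :: 'a
    assume h: "fuzzy_ideal \<mu> \<and> non_constant \<mu>" and xy: "x \<noteq> 0 \<and> y \<noteq> 0"
    have m1: "\<And>a b. \<mu> (a * b) \<ge> \<mu> b" and m2: "\<And>a b. \<mu> (a * b) \<ge> \<mu> a"
      using h unfolding fuzzy_ideal_def by auto
    have z: "\<And>a. \<mu> 0 \<ge> \<mu> a" proof - fix a have "\<mu> (0 * a) \<ge> \<mu> a" by (rule m1) then show "\<mu> 0 \<ge> \<mu> a" by simp qed
    have one: "\<And>a. a \<noteq> 0 \<Longrightarrow> \<mu> a = \<mu> 1"
    proof -
      fix a :: 'a assume "a \<noteq> 0"
      then obtain b where "a * b = 1" using sf unfolding semifield_def by blast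
      then have "\<mu> 1 \<ge> \<mu> a" using m2[of a b] by simp
      moreover have "\<mu> a \<ge> \<mu> 1" using m2[of 1 a] by simp
      ultimately show "\<mu> a = \<mu> 1" by simp
    qed
    have "\<mu> 1 \<noteq> \<mu> 0"
    proof
      assume e: "\<mu> 1 = \<mu> 0"
      have "\<And>a. \<mu> a = \<mu> 0" proof -
        fix a :: 'a show "\<mu> a = \<mu> 0"
        proof (cases "a = 0")
          case False then show ?thesis using one[OF False] e by simp
        qed simp
      qed
      moreover obtain p q where "\<mu> p \<noteq> \<mu> q" using h unfolding non_constant_def by blast
      ultimately show False by (metis)
    qed
    then have "\<mu> 1 < \<mu> 0" using z[of 1] by simp
    moreover have "\<mu> x = \<mu> 1" "\<mu> y = \<mu> 1" using one xy by blast+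
    ultimately show "\<mu> x = \<mu> y \<and> \<mu> y < \<mu> 0" by simp
  qed
next
  assume H: "\<forall>\<mu> :: 'a \<Rightarrow> real. fuzzy_ideal \<mu> \<and> non_constant \<mu> \<longrightarrow>
       (\<forall>x y. x \<noteq> 0 \<and> y \<noteq> 0 \<longrightarrow> \<mu> x = \<mu> y \<and> \<mu> y < \<mu> 0)"
  show "semifield TYPE('a)"
    unfolding semifield_def
  proof (intro allI impI, rule ccontr)
    fix x :: 'a assume x0: "x \<noteq> 0" and ni: "\<not> (\<exists>y. x * y = 1)"
    define \<mu> :: "'a \<Rightarrow> real" where "\<mu> z = (if \<exists>m. z = x * m then 1 else 0)" for z
    have fi: "fuzzy_ideal \<mu>"
      unfolding fuzzy_ideal_def \<mu>_def
    proof (intro conjI allI)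
      show "\<exists>z. (if \<exists>m. z = x * m then 1 else 0::real) \<noteq> 0" proof (rule exI[of _ 0])
        have "(0::'a) = x * 0" by simp
        then have "\<exists>m. (0::'a) = x * m" by blast
        then show "(if \<exists>m. (0::'a) = x * m then 1 else 0::real) \<noteq> 0" by simp
      qed
    next
      fix a b :: 'a
      show "min (if \<exists>m. a = x * m then 1 else 0::real) (if \<exists>m. b = x * m then 1 else 0)
          \<le> (if \<exists>m. a + b = x * m then 1 else 0)"
      proof (cases "(\<exists>m. a = x * m) \<and> (\<exists>m. b = x * m)")
        case True
        then obtain m n where "a = x * m" "b = x * n" by blast
        then have "a + b = x * (m + n)" by (simp add: distrib_left)
        then show ?thesis using True by auto
      qed auto
      show "(if \<exists>m. b = x * m then 1 else 0::real) \<le> (if \<exists>m. a * b = x * m then 1 else 0)"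
      proof (cases "\<exists>m. b = x * m")
        case True
        then obtain m where "b = x * m" by blast
        then have "a * b = x * (a * m)" by (simp add: ac_simps)
        then show ?thesis by auto
      qed auto
      show "(if \<exists>m. a = x * m then 1 else 0::real) \<le> (if \<exists>m. a * b = x * m then 1 else 0)"
      proof (cases "\<exists>m. a = x * m")
        case True
        then obtain m where "a = x * m" by blast
        then have "a * b = x * (m * b)" by (simp add: ac_simps)
        then show ?thesis by auto
      qed auto
    qed auto
    have "(0::'a) = x * 0" by simp
    then have "\<exists>m. (0::'a) = x * m" by blast
    then have "\<mu> 0 = 1" unfolding \<mu>_def by simp
    moreover have "\<mu> 1 = 0" unfolding \<mu>_def proof -
      have "\<not> (\<exists>m. (1::'a) = x * m)" using ni by (metis)
      then show "(if \<exists>m. (1::'a) = x * m then 1 else 0::real) = 0" by simp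
    qed
    ultimately have nc: "non_constant \<mu>" unfolding non_constant_def by (intro exI[of _ 0] exI[of _ 1]) simp
    have "x = x * 1" by simp
    then have "\<exists>m. x = x * m" by blast
    then have "\<mu> x = 1" unfolding \<mu>_def by simp
    moreover have "\<mu> x = \<mu> 1" using H fi nc x0 by simp
    ultimately show False using \<open>\<mu> 1 = 0\<close> by simp
  qed
qed

end
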